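(* For all $n\ge0$, \[ c_{n+3}^2-1=\sum_{k=0}^n\left\{c_k^2+2\sum_{i=0}^k p_{k+2-i}c_i^2\right\}. \]
   Context: The Narayana's cows numbers $c_n$ are defined by $c_n=\delta_{n,0}+c_{n-1}+c_{n-3}$ for $n\ge0$, $c_n=0$ for $n<0$. The Padovan numbers $p_n$ are defined by $p_n=\delta_{n,0}+p_{n-2}+p_{n-3}$ for $n\ge0$, $p_n=0$ for $n<0$. $\delta_{i,j}$ is $1$ if $i=j$ and $0$ otherwise. *)

theory Defs
  imports Main
begin

text \<open>Narayana's cows numbers: c_n = [n=0] + c_(n-1) + c_(n-3), c_n = 0 for n < 0.\<close>
fun cows :: "nat \<Rightarrow> nat" where
  "cows 0 = 1"
| "cows (Suc 0) = 1"
| "cows (Suc (Suc 0)) = 1"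
| "cows (Suc (Suc (Suc n))) = cows (Suc (Suc n)) + cows n"

text \<open>Padovan numbers: p_n = [n=0] + p_(n-2) + p_(n-3), p_n = 0 for n < 0.\<close>
fun padovan :: "nat \<Rightarrow> nat" where
  "padovan 0 = 1"
| "padovan (Suc 0) = 0"
| "padovan (Suc (Suc 0)) = 1"
| "padovan (Suc (Suc (Suc n))) = padovan (Suc n) + padovan n"

end

theory Submission
  imports Defs
begin

lemma pad_rec: "padovan (m + 3) = padovan (m + 1) + padovan m"
  by (simp add: numeral_3_eq_3)

lemma cows_rec: "cows (m + 3) = cows (m + 2) + cows m"
  by (simp add: numeral_3_eq_3 numeral_2_eq_2)

definition S :: "nat \<Rightarrow> nat" where
  "S k = (\<Sum>i\<le>k. padovan (k + 2 - i) * cows i ^ 2)"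

lemma S_step: "S (n + 3) = cows (n+2)^2 + cows (n+3)^2 + S (n+1) + S n"
proof -
  have e: "(\<Sum>i\<le>n. padovan (n + 5 - i) * cows i ^ 2)
     = (\<Sum>i\<le>n. padovan (n + 3 - i) * cows i ^ 2) + (\<Sum>i\<le>n. padovan (n + 2 - i) * cows i ^ 2)"
  proof -
    have "\<And>i. i \<le> n \<Longrightarrow> padovan (n + 5 - i) = padovan (n + 3 - i) + padovan (n + 2 - i)"
    proof -
      fix i assume "i \<le> n"
      then have "n + 5 - i = (n + 2 - i) + 3" "n + 3 - i = (n + 2 - i) + 1" by auto
      then show "padovan (n + 5 - i) = padovan (n + 3 - i) + padovan (n + 2 - i)"
        using pad_rec by metis
    qed
    then show ?thesis by (simp add: sum.distrib[symmetric] algebra_simps)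
  qed
  have s1: "S (n+1) = (\<Sum>i\<le>n. padovan (n + 3 - i) * cows i ^ 2) + cows (n+1)^2"
  proof -
    have "S (n+1) = (\<Sum>i\<le>n. padovan (n + 1 + 2 - i) * cows i ^ 2) + padovan 2 * cows (n+1)^2"
      using sum.atMost_Suc[of "\<lambda>i. padovan (n + 1 + 2 - i) * cows i ^ 2" n] unfolding S_def by simp
    moreover have "n + 1 + 2 = n + 3" by simp
    moreover have "padovan 2 = 1" by (simp add: eval_nat_numeral)
    ultimately show ?thesis by (simp add: eval_nat_numeral)
  qed
  have s0: "S n = (\<Sum>i\<le>n. padovan (n + 2 - i) * cows i ^ 2)"
    unfolding S_def by simp
  have "S (n+3) = (\<Sum>i\<le>n. padovan (n + 5 - i) * cows i ^ 2)
      + padovan 4 * cows (n+1)^2 + padovan 3 * cows (n+2)^2 + padovan 2 * cows (n+3)^2"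
    unfolding S_def by (simp add: numeral_3_eq_3 numeral_2_eq_2 eval_nat_numeral)
  moreover have "padovan 4 = 1" "padovan 3 = 1" "padovan 2 = 1"
    by (simp_all add: eval_nat_numeral)
  ultimately show ?thesis using e s1 s0 by simp
qed

lemma S_eq: "S k = cows (k+2) * cows k"
proof -
  have "S k = cows (k+2) * cows k \<and> S (k+1) = cows (k+3) * cows (k+1)
        \<and> S (k+2) = cows (k+4) * cows (k+2)"
  proof (induction k)
    case 0
    then show ?case by (simp add: S_def eval_nat_numeral)
  next
    case (Suc n)
    then have h: "S n = cows (n+2) * cows n" "S (n+1) = cows (n+3) * cows (n+1)"
      "S (n+2) = cows (n+4) * cows (n+2)" by auto
    have c5: "cows (n+5) = cows (n+4) + cows (n+2)" proof - have "n+5 = (n+2)+3" "n+4 = (n+2)+2" by simp_all then show ?thesis using cows_rec[of "n+2"] by metis qed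
    have c4: "cows (n+4) = cows (n+3) + cows (n+1)" proof - have "n+4 = (n+1)+3" "n+3 = (n+1)+2" by simp_all then show ?thesis using cows_rec[of "n+1"] by metis qed
    have c3: "cows (n+3) = cows (n+2) + cows n" proof - have "n+3 = (n)+3" "n+2 = (n)+2" by simp_all then show ?thesis using cows_rec[of "n"] by metis qed
    have "S (n+3) = cows (n+5) * cows (n+3)"
      unfolding S_step h c5 c4 c3 by (simp add: power2_eq_square algebra_simps)
    moreover have "Suc n + 2 = n+3" "Suc n + 1 = n + 2" "Suc n + 3 = n+4" "Suc n + 4 = n+5" "Suc n = n + 1" by simp_all
    ultimately show ?case using h by (simp only:)
  qed
  then show ?thesis by simp
qed

theorem mainTheorem14:
  fixes n :: nat
  shows "int (cows (n + 3))^2 - 1 =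
    (\<Sum>k = 0..n. int (cows k)^2 + 2 * (\<Sum>i = 0..k. int (padovan (k + 2 - i)) * int (cows i)^2))"
proof -
  have inner: "(\<Sum>i = 0..k. int (padovan (k + 2 - i)) * int (cows i)^2) = int (cows (k+2) * cows k)" for k
  proof -
    have "(\<Sum>i = 0..k. int (padovan (k + 2 - i)) * int (cows i)^2) = int (S k)"
      unfolding S_def by (simp add: atLeast0AtMost)
    then show ?thesis using S_eq by simp
  qed
  have r: "(\<Sum>k = 0..n. int (cows k)^2 + 2 * (\<Sum>i = 0..k. int (padovan (k + 2 - i)) * int (cows i)^2))
     = (\<Sum>k = 0..n. int (cows k)^2 + 2 * int (cows (k+2) * cows k))"
    by (rule sum.cong) (simp_all only: inner)
  have "int (cows (n + 3))^2 - 1 = (\<Sum>k = 0..n. int (cows k)^2 + 2 * int (cows (k+2) * cows k))"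
  proof (induction n)
    case 0
    then show ?case by (simp add: eval_nat_numeral)
  next
    case (Suc n)
    have c: "cows (n+4) = cows (n+3) + cows (n+1)" proof - have "n+4 = (n+1)+3" "n+3 = (n+1)+2" by simp_all then show ?thesis using cows_rec[of "n+1"] by metis qed
    have e: "Suc n + 3 = n + 4" "Suc n + 2 = n + 3" "Suc n = n + 1" "n + 1 + 2 = n + 3" by simp_all
    have "(\<Sum>k = 0..Suc n. int (cows k)^2 + 2 * int (cows (k+2) * cows k))
        = (\<Sum>k = 0..n. int (cows k)^2 + 2 * int (cows (k+2) * cows k)) + (int (cows (n+1))^2 + 2 * int (cows (n+3) * cows (n+1)))"
      unfolding sum.atLeast0_atMost_Suc by (simp only: e)
    then show ?case unfolding e using Suc c
      by (simp add: power2_eq_square algebra_simps eval_nat_numeral del: cows.simps)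
  qed
  then show ?thesis using r by simp
qed

end
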